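(* For GP-EI with BOI and any $t\in\mathbb{N}$, when both $E^r(t)$ and $E^y(t)$ hold, $$r_t\le\big(c_y(t)+2\beta_t^{1/2}+\phi(0)\big)\sigma_{t-1}(\mathbf{x}_t)+c_\alpha\beta_t^{1/2}\sigma_{t-1}([\mathbf{x}^*]_t)+\frac{1}{t^2},$$ where $c_y(t)=\max\big\{\log^{1/2}\!\big(\frac{t-1+\sigma^2}{2\pi\phi^2(0)\sigma^2}\big),3\big\}$ and $c_\alpha=1.328$.
   Context: Setting: $d\ge1$, $r>0$, $C\subseteq[0,r]^d$ compact; $k$ positive semidefinite kernel with $k(\mathbf{x},\mathbf{x}')\le1$, $k(\mathbf{x},\mathbf{x})=1$ on $C$. $f$ is a sample path of $GP(0,k)$, Lipschitz with constant $L\ge1/(rd)$ in $\ell_1$-norm; $\mathbf{x}^*\in\arg\min_Cf$. Observations $y_t=f(\mathbf{x}_t)+\epsilon_t$, $\epsilon_t$ i.i.d. $\mathcal{N}(0,\sigma^2)$, $\sigma>0$. Posterior $\mu_t(\mathbf{x})=\mathbf{k}_t(\mathbf{x})^T(\mathbf{K}_t+\sigma^2\mathbf{I})^{-1}\mathbf{y}_{1:t}$, $\sigma_t^2(\mathbf{x})=1-\mathbf{k}_t(\mathbf{x})^T(\mathbf{K}_t+\sigma^2\mathbf{I})^{-1}\mathbf{k}_t(\mathbf{x})$ ($\mathbf{K}_t=[k(\mathbf{x}_i,\mathbf{x}_j)]_{i,j\le t}$, $\mathbf{k}_t(\mathbf{x})=[k(\mathbf{x}_i,\mathbf{x})]_{i\le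 t}$). BOI incumbent $\xi_t^+=y_t^+=\min_{i\le t}y_i$. $EI_t(\mathbf{x})=(\xi_t^+-\mu_t(\mathbf{x}))\Phi(z_t(\mathbf{x}))+\sigma_t(\mathbf{x})\phi(z_t(\mathbf{x}))$, $z_t=(\xi_t^+-\mu_t)/\sigma_t$, $\phi,\Phi$ standard normal pdf/cdf; GP-EI picks $\mathbf{x}_t\in\arg\max_CEI_{t-1}$. $r_t=f(\mathbf{x}_t)-f(\mathbf{x}^* )$. Discretization: $\mathbb{C}_t\subseteq C$ finite, $|\mathbb{C}_t|=(Lrdt^2)^d$, $\|\mathbf{x}-[\mathbf{x}]_t\|_1\le1/(Lt^2)$ for all $\mathbf{x}\in C$, $[\mathbf{x}]_t$ a closest point of $\mathbb{C}_t$. With $\delta\in(0,1)$, $\pi_t=\pi^2t^2/6$, $\beta_t=2\log(8|\mathbb{C}_t|\pi_t/\delta)$. $E^r(t)$: $|f(\mathbf{x})-\mu_{t-1}(\mathbf{x})|\le\beta_t^{1/2}\sigma_{t-1}(\mathbf{x})$ holds for all $\mathbf{x}\in\mathbb{C}_t$, for $\mathbf{x}=\mathbf{x}_t$ and for $\mathbf{x}=\mathbf{x}^*$. $E^y(t)$: $y^+_{t-1}-f(\mathbf{x}^* )\ge\beta_t^{1/2}\sigma_{t-1}(\mathbf{x}_t)$. *)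

theory Defs
  imports "HOL-Probability.Probability" "Jordan_Normal_Form.Gauss_Jordan_Elimination"
begin

definition l1dist :: "real^'n \<Rightarrow> real^'n \<Rightarrow> real" where
  "l1dist x x' = (\<Sum>i\<in>UNIV. \<bar>x$i - x'$i\<bar>)"

definition psd_kernel :: "('a \<Rightarrow> 'a \<Rightarrow> real) \<Rightarrow> bool" where
  "psd_kernel k \<longleftrightarrow> (\<forall>x x'. k x x' = k x' x) \<and>
     (\<forall>(m::nat) (p::nat \<Rightarrow> 'a) (c::nat \<Rightarrow> real).
        (\<Sum>i<m. \<Sum>j<m. c i * c j * k (p i) (p j)) \<ge> 0)"

(* data after t observations: points x 1, ..., x t and values y 1, ..., y t *)
definition gram :: "('a \<Rightarrow> 'a \<Rightarrow> real) \<Rightarrow> (nat \<Rightarrow> 'a) \<Rightarrow> nat \<Rightarrow> real mat" where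
  "gram k x t = mat t t (\<lambda>(i,j). k (x (i+1)) (x (j+1)))"

definition kvec :: "('a \<Rightarrow> 'a \<Rightarrow> real) \<Rightarrow> (nat \<Rightarrow> 'a) \<Rightarrow> nat \<Rightarrow> 'a \<Rightarrow> real vec" where
  "kvec k x t p = vec t (\<lambda>i. k (x (i+1)) p)"

definition yvec :: "(nat \<Rightarrow> real) \<Rightarrow> nat \<Rightarrow> real vec" where
  "yvec y t = vec t (\<lambda>i. y (i+1))"

definition reg_inv :: "('a \<Rightarrow> 'a \<Rightarrow> real) \<Rightarrow> real \<Rightarrow> (nat \<Rightarrow> 'a) \<Rightarrow> nat \<Rightarrow> real mat" where
  "reg_inv k sn x t = the (mat_inverse (gram k x t + sn\<^sup>2 \<cdot>\<^sub>m 1\<^sub>m t))"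

definition post_mean :: "('a \<Rightarrow> 'a \<Rightarrow> real) \<Rightarrow> real \<Rightarrow> (nat \<Rightarrow> 'a) \<Rightarrow> (nat \<Rightarrow> real) \<Rightarrow> nat \<Rightarrow> 'a \<Rightarrow> real" where
  "post_mean k sn x y t p = scalar_prod (kvec k x t p) (reg_inv k sn x t *\<^sub>v yvec y t)"

definition post_var :: "('a \<Rightarrow> 'a \<Rightarrow> real) \<Rightarrow> real \<Rightarrow> (nat \<Rightarrow> 'a) \<Rightarrow> nat \<Rightarrow> 'a \<Rightarrow> real" where
  "post_var k sn x t p = 1 - scalar_prod (kvec k x t p) (reg_inv k sn x t *\<^sub>v kvec k x t p)"

definition post_sd :: "('a \<Rightarrow> 'a \<Rightarrow> real) \<Rightarrow> real \<Rightarrow> (nat \<Rightarrow> 'a) \<Rightarrow> nat \<Rightarrow> 'a \<Rightarrow> real" where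
  "post_sd k sn x t p = sqrt (post_var k sn x t p)"

definition nphi :: "real \<Rightarrow> real" where
  "nphi z = std_normal_density z"

definition nPhi :: "real \<Rightarrow> real" where
  "nPhi z = (LBINT u:{..z}. std_normal_density u)"

definition incumbent :: "(nat \<Rightarrow> real) \<Rightarrow> nat \<Rightarrow> real" where
  "incumbent y t = Min (y ` {1..t})"

definition EI :: "('a \<Rightarrow> 'a \<Rightarrow> real) \<Rightarrow> real \<Rightarrow> (nat \<Rightarrow> 'a) \<Rightarrow> (nat \<Rightarrow> real) \<Rightarrow> nat \<Rightarrow> 'a \<Rightarrow> real" where
  "EI k sn x y t p =
     (let xi = incumbent y t; m = post_mean k sn x y t p; s = post_sd k sn x t p;
          z = (xi - m) / s
      in (xi - m) * nPhi z + s * nphi z)"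

definition pi_t :: "nat \<Rightarrow> real" where
  "pi_t t = pi\<^sup>2 * (real t)\<^sup>2 / 6"

definition beta :: "nat \<Rightarrow> nat \<Rightarrow> real \<Rightarrow> real" where
  "beta t card_Ct delta = 2 * ln (8 * real card_Ct * pi_t t / delta)"

definition c_y :: "real \<Rightarrow> nat \<Rightarrow> real" where
  "c_y sn t = max (sqrt (ln ((real t - 1 + sn\<^sup>2) / (2 * pi * (nphi 0)\<^sup>2 * sn\<^sup>2)))) 3"

definition c_alpha :: real where
  "c_alpha = 1.328"

end

theory Submission
  imports Defs "Jordan_Normal_Form.Determinant" "HOL-Real_Asymp.Real_Asymp"
begin



lemma phi_def': "nphi z = exp (- z\<^sup>2 / 2) / sqrt (2 * pi)"
  by (simp add: nphi_def std_normal_density_def)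

lemma int_phi: "integrable lborel (\<lambda>u. std_normal_density u)"
  by simp

lemma int_uphi: "integrable lborel (\<lambda>u. std_normal_density u * u)"
  using integrable_std_normal_moment[of 1] by simp

lemma int_uphi0: "(LINT u|lborel. std_normal_density u * u) = 0"
  using integral_std_normal_moment_odd[of 0] by simp

lemma tail_uphi: "(LINT u|lborel. indicator {a..} u * (std_normal_density u * u)) = nphi a"
proof -
  let ?g = "\<lambda>u. indicator {a..} u *\<^sub>R (std_normal_density u * u)"
  have ig: "integrable lborel ?g"
    by (rule integrable_mult_indicator) (auto simp: int_uphi)
  have L1: "((\<lambda>y. LINT u|lborel. indicator {..y} u *\<^sub>R ?g u) \<longlongrightarrow> integral\<^sup>L lborel ?g) at_top"
    by (rule tendsto_integral_at_top[OF sets_lborel ig])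
  have eq: "(LINT u|lborel. indicator {..y} u *\<^sub>R ?g u) = nphi a - nphi y" if "a \<le> y" for y
  proof -
    have "(LINT u|lborel. indicator {..y} u *\<^sub>R ?g u) = (LINT u|lborel. indicator {a..y} u *\<^sub>R (std_normal_density u * u))"
      by (intro Bochner_Integration.integral_cong) (auto split: split_indicator)
    also have "\<dots> = (- nphi y) - (- nphi a)"
      by (rule integral_FTC_atLeastAtMost[OF that])
         (auto intro!: derivative_eq_intros continuous_intros simp: has_real_derivative_iff_has_vector_derivative[symmetric]
            nphi_def std_normal_density_def field_simps power2_eq_square)
    finally show ?thesis by simp
  qed
  have L2: "((\<lambda>y. nphi y) \<longlongrightarrow> 0) at_top"
    unfolding phi_def' by real_asymp
  have L3: "((\<lambda>y. LINT u|lborel. indicator {..y} u *\<^sub>R ?g u) \<longlongrightarrow> nphi a - 0) at_top"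
  proof (rule Lim_transform_eventually)
    show "((\<lambda>y. nphi a - nphi y) \<longlongrightarrow> nphi a - 0) at_top"
      using tendsto_diff[OF tendsto_const L2, of "nphi a"] .
    show "eventually (\<lambda>y. nphi a - nphi y = (LINT u|lborel. indicator {..y} u *\<^sub>R ?g u)) at_top"
      unfolding eventually_at_top_linorder by (intro exI[of _ a] allI impI) (rule eq[symmetric])
  qed
  show ?thesis using tendsto_unique[OF _ L1 L3] by simp
qed

lemma int_ind: "A \<in> sets lborel \<Longrightarrow> integrable lborel (\<lambda>u. indicator A u * std_normal_density u)"
  using integrable_mult_indicator[OF _ int_phi, of A] by simp

lemma int_ind_u: "A \<in> sets lborel \<Longrightarrow> integrable lborel (\<lambda>u. indicator A u * (std_normal_density u * u))"
  using integrable_mult_indicator[OF _ int_uphi, of A] by simp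

lemma head_uphi: "(LINT u|lborel. indicator {..z} u * (std_normal_density u * u)) = - nphi z"
proof -
  have "AE u in lborel. indicator {..z} u * (std_normal_density u * u)
      = std_normal_density u * u - indicator {z..} u * (std_normal_density u * u)"
    using AE_lborel_singleton[of z] by eventually_elim (auto split: split_indicator)
  then have "(LINT u|lborel. indicator {..z} u * (std_normal_density u * u))
      = (LINT u|lborel. std_normal_density u * u - indicator {z..} u * (std_normal_density u * u))"
    by (intro integral_cong_AE) auto
  also have "\<dots> = (LINT u|lborel. std_normal_density u * u) - (LINT u|lborel. indicator {z..} u * (std_normal_density u * u))"
    by (rule Bochner_Integration.integral_diff[OF int_uphi int_ind_u]) auto
  also have "\<dots> = - nphi z" using int_uphi0 tail_uphi[of z] by simp
  finally show ?thesis .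
qed

lemma nPhi_eq: "nPhi z = (LINT u|lborel. indicator {..z} u * std_normal_density u)"
  by (simp add: nPhi_def set_lebesgue_integral_def)

definition tau :: "real \<Rightarrow> real" where "tau z = z * nPhi z + nphi z"

lemma E_pt: "max (z - u) 0 * std_normal_density u
   = z * (indicator {..z} u * std_normal_density u) - indicator {..z} u * (std_normal_density u * u)"
  by (auto split: split_indicator simp: max_def algebra_simps)

lemma E_int: "integrable lborel (\<lambda>u. max (z - u) 0 * std_normal_density u)"
  unfolding E_pt by (intro Bochner_Integration.integrable_diff Bochner_Integration.integrable_mult_right int_ind int_ind_u) auto

lemma E_eq: "(LINT u|lborel. max (z - u) 0 * std_normal_density u) = tau z"
proof -
  have "(LINT u|lborel. max (z - u) 0 * std_normal_density u)
     = (LINT u|lborel. z * (indicator {..z} u * std_normal_density u)) - (LINT u|lborel. indicator {..z} u * (std_normal_density u * u))"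
    unfolding E_pt by (rule Bochner_Integration.integral_diff) (auto intro!: Bochner_Integration.integrable_mult_right int_ind int_ind_u)
  also have "\<dots> = tau z"
    by (simp add: tau_def head_uphi nPhi_eq)
  finally show ?thesis .
qed

lemma tau_mono: "z1 \<le> z2 \<Longrightarrow> tau z1 \<le> tau z2"
  unfolding E_eq[symmetric]
  by (intro integral_mono E_int mult_right_mono) auto

lemma tau_nonneg: "0 \<le> tau z"
  unfolding E_eq[symmetric] by (intro integral_nonneg_AE) auto

lemma tau_ge: "z \<le> tau z"
proof -
  have pt: "z * std_normal_density u - std_normal_density u * u \<le> max (z - u) 0 * std_normal_density u" for u
  proof -
    have "(z - u) * std_normal_density u \<le> max (z - u) 0 * std_normal_density u"
      by (intro mult_right_mono) auto
    then show ?thesis by (simp add: algebra_simps)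
  qed
  have "(LINT u|lborel. z * std_normal_density u - std_normal_density u * u) \<le> tau z"
    unfolding E_eq[symmetric]
    by (intro integral_mono E_int Bochner_Integration.integrable_diff int_uphi Bochner_Integration.integrable_mult_right int_phi pt)
  also have "(LINT u|lborel. z * std_normal_density u - std_normal_density u * u) = z"
    by (subst Bochner_Integration.integral_diff) (auto intro!: int_uphi integrable_mult_right simp: int_uphi0)
  finally show ?thesis .
qed

lemma nphi_anti: "\<bar>u\<bar> \<le> \<bar>v\<bar> \<Longrightarrow> nphi v \<le> nphi u"
  unfolding phi_def' by (intro divide_right_mono) (auto simp: abs_le_square_iff)

lemma nphi_pos: "0 < nphi u"
  unfolding phi_def' by simp

lemma int_const_Icc: fixes a b c :: real shows "a \<le> b \<Longrightarrow> (LINT u|lborel. indicator {a..b} u * c) = c * (b - a)"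
proof -
  assume ab: "a \<le> b"
  have "(LINT u|lborel. indicator {a..b} u *\<^sub>R c) = c * b - c * a"
    by (rule integral_FTC_atLeastAtMost[OF ab])
       (auto intro!: derivative_eq_intros simp: has_real_derivative_iff_has_vector_derivative[symmetric])
  then show ?thesis by (simp add: algebra_simps)
qed

lemma int_const_Icc_int: fixes a b c :: real shows "integrable lborel (\<lambda>u. indicator {a..b} u * (c::real))"
  using borel_integrable_atLeastAtMost[of a b "\<lambda>_. c"] by simp

lemma tau_low: assumes w: "0 \<le> w" shows "nphi (w + 2) \<le> tau (- w)"
proof -
  have "(LINT u|lborel. indicator {-w-2..-w-1} u * nphi (w+2)) \<le> tau (-w)"
    unfolding E_eq[symmetric]
  proof (intro integral_mono E_int int_const_Icc_int)
    fix u :: real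
    show "indicator {-w-2..-w-1} u * nphi (w+2) \<le> max (- w - u) 0 * std_normal_density u"
    proof (cases "u \<in> {-w-2..-w-1}")
      case True
      then have "nphi (w+2) \<le> nphi u" using w by (intro nphi_anti) auto
      moreover have "1 \<le> max (- w - u) 0" using True by auto
      ultimately have "1 * nphi (w+2) \<le> max (- w - u) 0 * nphi u"
        by (intro mult_mono) (auto simp: less_imp_le[OF nphi_pos])
      then show ?thesis using True by (simp add: nphi_def)
    qed auto
  qed
  then show ?thesis by (simp add: int_const_Icc)
qed

lemma nPhi_nonneg: "0 \<le> nPhi z"
  unfolding nPhi_eq by (intro integral_nonneg_AE) auto

lemma nPhi_le1: "nPhi z \<le> 1"
proof -
  have "nPhi z \<le> (LINT u|lborel. std_normal_density u)"
    unfolding nPhi_eq by (intro integral_mono int_ind int_phi) (auto split: split_indicator)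
  then show ?thesis by simp
qed

lemma nPhi0_low: "nphi 1 \<le> nPhi 0"
proof -
  have "(LINT u|lborel. indicator {-1..0} (u::real) * nphi 1) \<le> (LINT u|lborel. indicator {..0} u * std_normal_density u)"
  proof (rule integral_mono[OF int_const_Icc_int int_ind])
    fix u :: real
    show "indicator {-1..0} u * nphi 1 \<le> indicator {..0} u * std_normal_density u"
      by (cases "u \<in> {-1..0}") (auto intro!: nphi_anti[unfolded nphi_def] simp: nphi_def split: split_indicator)
  qed auto
  then show ?thesis by (simp add: int_const_Icc nPhi_eq)
qed



lemma quad_gram:
  assumes "v \<in> carrier_vec n"
  shows "v \<bullet> (gram k x n *\<^sub>v v) = (\<Sum>i<n. \<Sum>j<n. v$i * v$j * k (x (i+1)) (x (j+1)))"
  using assms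
  by (auto simp: gram_def scalar_prod_def sum_distrib_left atLeast0LessThan mult.assoc mult.left_commute
       intro!: sum.cong)

lemma psd_gram:
  assumes "psd_kernel k" "v \<in> carrier_vec n"
  shows "0 \<le> v \<bullet> (gram k x n *\<^sub>v v)"
  using assms(1) unfolding quad_gram[OF assms(2)] psd_kernel_def
  by (auto elim!: allE[of _ n] allE[of _ "\<lambda>i. x (i+1)"] allE[of _ "\<lambda>i. v$i"])

lemma self_prod_pos:
  fixes v :: "real vec"
  assumes "v \<in> carrier_vec n" "v \<noteq> 0\<^sub>v n"
  shows "0 < v \<bullet> v"
proof -
  obtain i where i: "i < n" "v $ i \<noteq> 0"
    using assms by (metis eq_vecI carrier_vecD index_zero_vec(1) index_zero_vec(2))
  have "v \<bullet> v = (\<Sum>j\<in>{0..<n}. v$j * v$j)" using assms by (simp add: scalar_prod_def)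
  also have "\<dots> > 0"
    by (rule sum_pos2[of _ i]) (use i zero_less_power2[of "v$i"] in \<open>auto simp: power2_eq_square\<close>)
  finally show ?thesis .
qed

lemma self_prod_zero:
  fixes v :: "real vec"
  assumes "v \<in> carrier_vec n" "v \<bullet> v \<le> 0"
  shows "v = 0\<^sub>v n"
  using self_prod_pos[OF assms(1)] assms(2) by force

lemma smult_one_mat_vec:
  fixes v :: "real vec"
  assumes "v \<in> carrier_vec n"
  shows "(c \<cdot>\<^sub>m 1\<^sub>m n) *\<^sub>v v = c \<cdot>\<^sub>v v"
proof (rule eq_vecI)
  fix i assume i: "i < dim_vec (c \<cdot>\<^sub>v v)"
  then have i': "i < n" using assms by simp
  have "row (c \<cdot>\<^sub>m 1\<^sub>m n) i = c \<cdot>\<^sub>v unit_vec n i"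
    using i' by (intro eq_vecI) (auto simp: unit_vec_def)
  then show "((c \<cdot>\<^sub>m 1\<^sub>m n) *\<^sub>v v) $ i = (c \<cdot>\<^sub>v v) $ i"
    using i' assms by (simp add: mult_mat_vec_def)
qed (use assms in simp)

lemma reg_inv_props:
  assumes psd: "psd_kernel k" and sn: "sn > 0"
  shows "(gram k x n + sn\<^sup>2 \<cdot>\<^sub>m 1\<^sub>m n) * reg_inv k sn x n = 1\<^sub>m n \<and> reg_inv k sn x n \<in> carrier_mat n n"
proof -
  let ?A = "gram k x n + sn\<^sup>2 \<cdot>\<^sub>m 1\<^sub>m n"
  have A: "?A \<in> carrier_mat n n" by (simp add: gram_def)
  have "det ?A \<noteq> 0"
  proof
    assume "det ?A = 0"
    then obtain v where v: "v \<in> carrier_vec n" "v \<noteq> 0\<^sub>v n" "?A *\<^sub>v v = 0\<^sub>v n"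
      using det_0_iff_vec_prod_zero[OF A] by blast
    have "?A *\<^sub>v v = gram k x n *\<^sub>v v + sn\<^sup>2 \<cdot>\<^sub>v v"
      using v(1) by (simp add: add_mult_distrib_mat_vec[of _ n n] gram_def smult_one_mat_vec)
    have Gc: "gram k x n \<in> carrier_mat n n" by (simp add: gram_def)
    have "v \<bullet> (gram k x n *\<^sub>v v + sn\<^sup>2 \<cdot>\<^sub>v v) = v \<bullet> (gram k x n *\<^sub>v v) + v \<bullet> (sn\<^sup>2 \<cdot>\<^sub>v v)"
      by (rule scalar_prod_add_distrib[OF v(1)]) (use Gc v(1) in auto)
    also have "v \<bullet> (sn\<^sup>2 \<cdot>\<^sub>v v) = sn\<^sup>2 * (v \<bullet> v)"
      by (rule scalar_prod_smult_distrib[OF v(1) v(1)])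
    finally have "v \<bullet> (?A *\<^sub>v v) = v \<bullet> (gram k x n *\<^sub>v v) + sn\<^sup>2 * (v \<bullet> v)"
      using \<open>?A *\<^sub>v v = gram k x n *\<^sub>v v + sn\<^sup>2 \<cdot>\<^sub>v v\<close> by simp
    moreover have "v \<bullet> (?A *\<^sub>v v) = 0" using v by simp
    moreover have "0 \<le> v \<bullet> (gram k x n *\<^sub>v v)" by (rule psd_gram[OF psd v(1)])
    moreover have "0 < sn\<^sup>2 * (v \<bullet> v)" using self_prod_pos[OF v(1,2)] sn by simp
    ultimately show False by linarith
  qed
  then have "?A \<in> Units (ring_mat TYPE(real) n (undefined::unit))"
    by (rule det_non_zero_imp_unit[OF A])
  then have "mat_inverse ?A \<noteq> None" using mat_inverse(1)[OF A, where b="undefined::unit"] by blast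
  then obtain B where "mat_inverse ?A = Some B" by auto
  with mat_inverse(2)[OF A this] show ?thesis by (simp add: reg_inv_def)
qed

lemma post_var_pos:
  assumes psd: "psd_kernel k" and sn: "sn > 0" and kq: "k q q = 1"
  shows "0 < post_var k sn x n q"
proof -
  let ?K = "gram k x n"
  let ?A = "gram k x n + sn\<^sup>2 \<cdot>\<^sub>m 1\<^sub>m n"
  let ?B = "reg_inv k sn x n"
  define kv where "kv = kvec k x n q"
  define w where "w = ?B *\<^sub>v kv"
  have AB: "?A * ?B = 1\<^sub>m n" and Bc: "?B \<in> carrier_mat n n"
    using reg_inv_props[OF psd sn] by auto
  have Kc: "?K \<in> carrier_mat n n" by (simp add: gram_def)
  have Ac: "?A \<in> carrier_mat n n" by (simp add: gram_def)
  have kvc: "kv \<in> carrier_vec n" by (simp add: kv_def kvec_def)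
  have wc: "w \<in> carrier_vec n" using Bc kvc by (simp add: w_def)
  have "?A *\<^sub>v w = (?A * ?B) *\<^sub>v kv"
    unfolding w_def by (rule assoc_mult_mat_vec[symmetric, OF Ac Bc kvc])
  then have Aw: "?A *\<^sub>v w = kv" using AB kvc by simp
  have "?A *\<^sub>v w = ?K *\<^sub>v w + sn\<^sup>2 \<cdot>\<^sub>v w"
    using wc by (simp add: add_mult_distrib_mat_vec[of _ n n] gram_def smult_one_mat_vec)
  then have "w \<bullet> kv = w \<bullet> (?K *\<^sub>v w + sn\<^sup>2 \<cdot>\<^sub>v w)" using Aw by simp
  also have "\<dots> = w \<bullet> (?K *\<^sub>v w) + w \<bullet> (sn\<^sup>2 \<cdot>\<^sub>v w)"
    by (rule scalar_prod_add_distrib[OF wc]) (use Kc wc in auto)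
  also have "w \<bullet> (sn\<^sup>2 \<cdot>\<^sub>v w) = sn\<^sup>2 * (w \<bullet> w)"
    by (rule scalar_prod_smult_distrib[OF wc wc])
  finally have wk: "kv \<bullet> w = w \<bullet> (?K *\<^sub>v w) + sn\<^sup>2 * (w \<bullet> w)"
    using comm_scalar_prod[OF kvc wc] by simp
  have pv: "post_var k sn x n q = 1 - kv \<bullet> w"
    by (simp add: post_var_def kv_def w_def)
  have kvw: "kv \<bullet> w = (\<Sum>i<n. k (x (i+1)) q * w$i)"
    using wc by (simp add: scalar_prod_def kv_def kvec_def atLeast0LessThan)
  have sym: "\<And>a b. k a b = k b a" using psd by (simp add: psd_kernel_def)
  define p where "p = (\<lambda>i. if i < n then x (i+1) else q)"
  define c where "c = (\<lambda>i. if i < n then - w$i else (1::real))"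
  have S0: "0 \<le> (\<Sum>i<Suc n. \<Sum>j<Suc n. c i * c j * k (p i) (p j))"
    using psd unfolding psd_kernel_def by blast
  have inner: "(\<Sum>j<Suc n. c i * c j * k (p i) (p j))
      = (\<Sum>j<n. w$i * w$j * k (x(i+1)) (x(j+1))) - k (x(i+1)) q * w$i" if i: "i < n" for i
  proof -
    have "(\<Sum>j<n. c i * c j * k (p i) (p j)) = (\<Sum>j<n. w$i * w$j * k (x(i+1)) (x(j+1)))"
      by (rule sum.cong) (use i in \<open>auto simp: c_def p_def\<close>)
    then show ?thesis using i by (simp add: c_def p_def)
  qed
  have last: "(\<Sum>j<Suc n. c n * c j * k (p n) (p j)) = 1 - (\<Sum>j<n. k (x(j+1)) q * w$j)"
  proof -
    have "(\<Sum>j<n. c n * c j * k (p n) (p j)) = - (\<Sum>j<n. k (x(j+1)) q * w$j)"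
      unfolding sum_negf[symmetric] by (rule sum.cong) (auto simp: c_def p_def sym[of q])
    then show ?thesis by (simp add: c_def p_def kq)
  qed
  have e1: "(\<Sum>i<Suc n. \<Sum>j<Suc n. c i * c j * k (p i) (p j))
      = (\<Sum>i<n. \<Sum>j<Suc n. c i * c j * k (p i) (p j)) + (\<Sum>j<Suc n. c n * c j * k (p n) (p j))"
    by (rule sum.lessThan_Suc)
  have e2: "(\<Sum>i<n. \<Sum>j<Suc n. c i * c j * k (p i) (p j))
      = (\<Sum>i<n. (\<Sum>j<n. w$i * w$j * k (x(i+1)) (x(j+1))) - k (x(i+1)) q * w$i)"
    by (rule sum.cong[OF refl], rule inner, simp)
  have e3: "(\<Sum>i<n. (\<Sum>j<n. w$i * w$j * k (x(i+1)) (x(j+1))) - k (x(i+1)) q * w$i) + (1 - (\<Sum>j<n. k (x(j+1)) q * w$j))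
     = w \<bullet> (?K *\<^sub>v w) - 2 * (kv \<bullet> w) + 1"
    unfolding quad_gram[OF wc] kvw sum_subtractf by linarith
  have "0 \<le> w \<bullet> (?K *\<^sub>v w) - 2 * (kv \<bullet> w) + 1" using S0 e1 e2 e3 last by simp
  then have ge: "sn\<^sup>2 * (w \<bullet> w) \<le> post_var k sn x n q" using wk pv by linarith
  show ?thesis
  proof (rule ccontr)
    assume "\<not> 0 < post_var k sn x n q"
    then have "sn\<^sup>2 * (w \<bullet> w) \<le> 0" using ge by simp
    then have "w \<bullet> w \<le> 0" using sn by (simp add: mult_le_0_iff)
    then have "w = 0\<^sub>v n" by (rule self_prod_zero[OF wc])
    then have "kv \<bullet> w = 0" using kvc by simp
    then show False using pv \<open>\<not> 0 < post_var k sn x n q\<close> by simp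
  qed
qed


definition eif :: "real \<Rightarrow> real \<Rightarrow> real \<Rightarrow> real" where
  "eif xi m s = (let z = (xi - m) / s in (xi - m) * nPhi z + s * nphi z)"

lemma eif_pos: "0 < s \<Longrightarrow> eif xi m s = s * tau ((xi - m) / s)"
  by (simp add: eif_def tau_def Let_def field_simps)

lemma eif_zero: "eif xi m 0 = (xi - m) * nPhi 0"
  by (simp add: eif_def)

lemma nphi_strict: assumes "\<bar>u\<bar> < \<bar>v\<bar>" shows "nphi v < nphi u"
proof -
  have "\<bar>u\<bar>\<^sup>2 < \<bar>v\<bar>\<^sup>2" using power_strict_mono[of "\<bar>u\<bar>" "\<bar>v\<bar>" 2] assms by simp
  then have "u\<^sup>2 < v\<^sup>2" by simp
  then show ?thesis unfolding phi_def' by (intro divide_strict_right_mono) auto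
qed

lemma nphi0: "nphi 0 = 1 / sqrt (2 * pi)" by (simp add: phi_def')

lemma nphi0_le1: "nphi 0 \<le> 1"
proof -
  have "1 \<le> sqrt (2 * pi)" using pi_gt3 by simp
  then show ?thesis by (simp add: nphi0)
qed

lemma nphi_le0: "nphi u \<le> nphi 0"
  by (rule nphi_anti) simp

lemma nphi_small: assumes "4 \<le> a" shows "nphi a < nphi 0 / 2"
proof -
  have "1 + a\<^sup>2 / 2 \<le> exp (a\<^sup>2 / 2)" by (rule exp_ge_add_one_self)
  moreover have "16 \<le> a\<^sup>2" using assms power_mono[of 4 a 2] by simp
  ultimately have "9 \<le> exp (a\<^sup>2 / 2)" by linarith
  then have "exp (- a\<^sup>2 / 2) < 1 / 2"
    by (simp add: exp_minus[of "a\<^sup>2 / 2", simplified] field_simps)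
  then have "exp (- a\<^sup>2 / 2) / sqrt (2 * pi) < (1 / 2) / sqrt (2 * pi)"
    by (intro divide_strict_right_mono) auto
  then show ?thesis by (simp add: phi_def' nphi0)
qed

lemma tau_le_phi: "z \<le> 0 \<Longrightarrow> tau z \<le> nphi z"
  unfolding tau_def using nPhi_nonneg[of z] by (simp add: mult_nonpos_nonneg)

lemma tau_minus_le: "tau z - z \<le> nphi 0 + max (- z) 0"
proof (cases "0 \<le> z")
  case True
  have "z * nPhi z \<le> z * 1" using True nPhi_le1[of z] by (intro mult_left_mono) auto
  then show ?thesis using nphi_le0[of z] by (simp add: tau_def)
next
  case False
  then show ?thesis using tau_le_phi[of z] nphi_le0[of z] by simp
qed

lemma tau0: "tau 0 = nphi 0" by (simp add: tau_def)

lemma core: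
  fixes b st ss sd ft fs fd mt ms md xi et es ed e0 cy ca :: real
  assumes b1: "1 \<le> b" and st0: "0 \<le> st" and ss0: "0 \<le> ss" and sd0: "0 < sd"
    and Et: "\<bar>ft - mt\<bar> \<le> b * st" and Es: "\<bar>fs - ms\<bar> \<le> b * ss" and Ed: "\<bar>fd - md\<bar> \<le> b * sd"
    and lip: "fd - e0 \<le> fs" and Ey: "b * st \<le> xi - fs"
    and et: "et = eif xi mt st" and es: "es = eif xi ms ss" and ed: "ed = eif xi md sd"
    and ets: "es \<le> et" and etd: "ed \<le> et" and cy: "3 \<le> cy" and ca: "1 \<le> ca"
  shows "ft - fs \<le> (cy + 2 * b + nphi 0) * st + ca * b * sd + e0"
proof -
  define zd where "zd = (xi - md) / sd"
  have ed': "ed = sd * tau zd" using ed eif_pos[OF sd0] by (simp add: zd_def)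
  have sdzd: "sd * zd = xi - md" using sd0 by (simp add: zd_def)
  have ed_ge0: "0 \<le> ed" using ed' sd0 tau_nonneg[of zd] by simp
  have ed_ge: "xi - md \<le> ed" using ed' sdzd sd0 tau_ge[of zd] mult_left_mono[of zd "tau zd" sd] by simp
  have base: "ft - fs \<le> mt - md + b * st + b * sd + e0" using Et Ed lip by (simp add: abs_le_iff)
  have sdb: "b * sd \<le> ca * b * sd" using ca b1 sd0 by (simp add: mult_right_mono)
  have P0: "0 < nPhi 0" "nPhi 0 \<le> 1" "nphi 1 \<le> nPhi 0"
    using nPhi0_low nphi_pos[of 1] nPhi_le1[of 0] by auto
  show ?thesis
  proof (cases "st = 0")
    case True
    have et0: "et = (xi - mt) * nPhi 0" using et True eif_zero by simp
    have "0 \<le> (xi - mt) * nPhi 0" using et0 etd ed_ge0 by simp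
    then have xm: "0 \<le> xi - mt" using P0 by (simp add: zero_le_mult_iff)
    have "mt \<le> md"
    proof (cases "xi - md \<le> 0")
      case True then show ?thesis using xm by simp
    next
      case False
      have "(xi - mt) * nPhi 0 \<le> (xi - mt) * 1" using xm P0 by (intro mult_left_mono) auto
      then show ?thesis using ed_ge etd et0 by simp
    qed
    then show ?thesis using base True sdb by simp
  next
    case False
    then have st: "0 < st" using st0 by simp
    define zt where "zt = (xi - mt) / st"
    have et': "et = st * tau zt" using et eif_pos[OF st] by (simp add: zt_def)
    have stzt: "st * zt = xi - mt" using st by (simp add: zt_def)
    have zt_low: "- (b + 3) \<le> zt"
    proof (rule ccontr)
      assume "\<not> - (b + 3) \<le> zt"
      then have zl: "zt < - (b + 3)" by simp
      have "tau zt \<le> nphi zt" using zl b1 by (intro tau_le_phi) simp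
      also have "nphi zt \<le> nphi (b + 3)" using zl b1 by (intro nphi_anti) simp
      finally have "et \<le> st * nphi (b + 3)" using et' st by (simp add: mult_left_mono)
      then have es_up: "es \<le> st * nphi (b + 3)" using ets by simp
      have n1: "nphi (b + 3) < nphi (b + 2)" using b1 by (intro nphi_strict) simp
      have n2: "nphi (b + 3) < nphi 0 / 2" using b1 by (intro nphi_small) simp
      have n3: "nphi (b + 3) < nphi 1" using b1 by (intro nphi_strict) simp
      show False
      proof (cases "ss = 0")
        case True
        then have "ms = fs" using Es by simp
        have es0: "es = (xi - ms) * nPhi 0" using es True eif_zero by simp
        have "st \<le> b * st" using mult_right_mono[of 1 b st] b1 st by simp
        then have "st \<le> xi - ms" using Ey \<open>ms = fs\<close> by simp
        then have "st * nPhi 0 \<le> es" using es0 P0 by (simp add: mult_right_mono)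
        moreover have "st * nphi 1 \<le> st * nPhi 0" using P0 st by (simp add: mult_left_mono)
        moreover have "st * nphi (b + 3) < st * nphi 1" using n3 st by simp
        ultimately show False using es_up by simp
      next
        case False
        then have ss: "0 < ss" using ss0 by simp
        define zs where "zs = (xi - ms) / ss"
        have es': "es = ss * tau zs" using es eif_pos[OF ss] by (simp add: zs_def)
        have sszs: "ss * zs = xi - ms" using ss by (simp add: zs_def)
        have xms: "b * st - b * ss \<le> xi - ms" using Es Ey by (simp add: abs_le_iff)
        show False
        proof (cases "ss \<le> st")
          case True
          have "0 \<le> b * (st - ss)" using True b1 by simp
          then have "0 \<le> xi - ms" using xms by (simp add: algebra_simps)
          then have "0 \<le> zs" using ss by (simp add: zs_def)
          then have "nphi 0 \<le> tau zs" using tau_mono[of 0 zs] tau0 by simp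
          then have e1: "ss * nphi 0 \<le> es" using es' ss by (simp add: mult_left_mono)
          have "st - ss \<le> b * (st - ss)" using True b1 mult_right_mono[of 1 b "st - ss"] by simp
          moreover have "ss * zs \<le> ss * tau zs" using tau_ge[of zs] ss by (simp add: mult_left_mono)
          ultimately have e2: "st - ss \<le> es" using es' sszs xms by (simp add: algebra_simps)
          have "st * (nphi 0 / 2) \<le> es"
          proof (cases "st \<le> 2 * ss")
            case True
            then have "st * (nphi 0 / 2) \<le> ss * nphi 0"
              using mult_right_mono[of st "2 * ss" "nphi 0"] nphi_pos[of 0] by simp
            then show ?thesis using e1 by simp
          next
            case False
            have "st * (nphi 0 / 2) \<le> st * (1 / 2)" using nphi0_le1 st by (intro mult_left_mono) auto
            then show ?thesis using e2 False by simp
          qed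
          moreover have "st * nphi (b + 3) < st * (nphi 0 / 2)" using n2 st by simp
          ultimately show False using es_up by simp
        next
          case False
          have "0 \<le> b * st" using b1 st by simp
          then have "- b * ss \<le> xi - ms" using xms by (simp add: algebra_simps)
          then have "- b \<le> zs" using ss by (simp add: zs_def pos_le_divide_eq)
          then have "tau (- b) \<le> tau zs" by (rule tau_mono)
          moreover have "nphi (b + 2) \<le> tau (- b)" using b1 by (intro tau_low) simp
          ultimately have "nphi (b + 2) \<le> tau zs" by simp
          then have "ss * nphi (b + 2) \<le> es" using es' ss by (simp add: mult_left_mono)
          moreover have "st * nphi (b + 2) \<le> ss * nphi (b + 2)"
            using False nphi_pos[of "b+2"] by (simp add: mult_right_mono)
          moreover have "st * nphi (b + 3) < st * nphi (b + 2)" using n1 st by simp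
          ultimately show False using es_up by simp
        qed
      qed
    qed
    have "max (- zt) 0 \<le> b + cy" using zt_low cy b1 by (auto simp: max_def)
    then have "tau zt - zt \<le> nphi 0 + (b + cy)"
      using tau_minus_le[of zt] by linarith
    then have "st * (tau zt - zt) \<le> st * (nphi 0 + (b + cy))" using st by (simp add: mult_left_mono)
    then have "mt - md \<le> st * (nphi 0 + (b + cy))"
      using ed_ge etd et' stzt by (simp add: algebra_simps)
    then show ?thesis using base sdb by (simp add: algebra_simps)
  qed
qed


lemma ln_low: assumes a: "8 \<le> (a::real)" shows "7 / 8 \<le> ln a"
proof -
  have ap: "0 < a" using a by simp
  have "ln (inverse a) \<le> inverse a - 1" by (rule ln_le_minus_one) (use ap in simp)
  then have "1 - inverse a \<le> ln a" using ap by (simp add: ln_inverse)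
  moreover have "inverse a \<le> 1 / 8" using a by (simp add: inverse_eq_divide divide_left_mono)
  ultimately show ?thesis by simp
qed

theorem mainTheorem7:
  fixes C :: "(real^'n) set" and r L sn delta :: real
    and k :: "real^'n \<Rightarrow> real^'n \<Rightarrow> real"
    and f :: "real^'n \<Rightarrow> real" and xstar :: "real^'n"
    and x :: "nat \<Rightarrow> real^'n" and y eps :: "nat \<Rightarrow> real"
    and Ct :: "(real^'n) set" and disc :: "real^'n \<Rightarrow> real^'n"
    and t :: nat
  assumes r_pos: "r > 0"
    and C_box: "C \<subseteq> {p. \<forall>i. 0 \<le> p$i \<and> p$i \<le> r}"
    and C_compact: "compact C"
    and k_psd: "psd_kernel k"
    and k_le1: "\<forall>p\<in>C. \<forall>q\<in>C. k p q \<le> 1"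
    and k_diag: "\<forall>p\<in>C. k p p = 1"
    and L_ge: "L \<ge> 1 / (r * real CARD('n))"
    and f_lip: "\<forall>p\<in>C. \<forall>q\<in>C. \<bar>f p - f q\<bar> \<le> L * l1dist p q"
    and xstar_min: "xstar \<in> C" "\<forall>p\<in>C. f xstar \<le> f p"
    and sigma_pos: "sn > 0"
    and obs: "\<forall>i. y i = f (x i) + eps i"
    and t_pos: "t \<ge> 1"
    and x_in_C: "\<forall>i\<in>{1..t}. x i \<in> C"
    and x_EI: "\<forall>p\<in>C. EI k sn x y (t - 1) p \<le> EI k sn x y (t - 1) (x t)"
    and delta: "0 < delta" "delta < 1"
    and Ct_sub: "Ct \<subseteq> C" and Ct_fin: "finite Ct"
    and Ct_card: "real (card Ct) = (L * r * real CARD('n) * (real t)\<^sup>2) ^ CARD('n)"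
    and disc_in: "\<forall>p\<in>C. disc p \<in> Ct"
    and disc_closest: "\<forall>p\<in>C. \<forall>q\<in>Ct. l1dist p (disc p) \<le> l1dist p q"
    and disc_close: "\<forall>p\<in>C. l1dist p (disc p) \<le> 1 / (L * (real t)\<^sup>2)"
    and Er: "\<forall>p \<in> Ct \<union> {x t, xstar}.
               \<bar>f p - post_mean k sn x y (t - 1) p\<bar>
                 \<le> sqrt (beta t (card Ct) delta) * post_sd k sn x (t - 1) p"
    and Ey: "incumbent y (t - 1) - f xstar \<ge> sqrt (beta t (card Ct) delta) * post_sd k sn x (t - 1) (x t)"
  shows "f (x t) - f xstar \<le>
           (c_y sn t + 2 * sqrt (beta t (card Ct) delta) + nphi 0) * post_sd k sn x (t - 1) (x t)
           + c_alpha * sqrt (beta t (card Ct) delta) * post_sd k sn x (t - 1) (disc xstar)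
           + 1 / (real t)\<^sup>2"
  proof -
  define b where "b = sqrt (beta t (card Ct) delta)"
  define xi where "xi = incumbent y (t - 1)"
  define mu where "mu = post_mean k sn x y (t - 1)"
  define s where "s = post_sd k sn x (t - 1)"
  define d where "d = disc xstar"
  have EIe: "EI k sn x y (t - 1) p = eif xi (mu p) (s p)" for p
    by (simp add: EI_def eif_def Let_def xi_def mu_def s_def)
  have dCt: "d \<in> Ct" using disc_in xstar_min(1) by (simp add: d_def)
  have dC: "d \<in> C" using dCt Ct_sub by auto
  have xtC: "x t \<in> C" using x_in_C t_pos by auto
  have dpos: "0 < CARD('n)" by simp
  have L_pos: "0 < L"
  proof -
    have "0 < 1 / (r * real CARD('n))" using r_pos by simp
    then show ?thesis using L_ge by linarith
  qed
  have Lrd: "1 \<le> L * r * real CARD('n)"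
  proof -
    have "1 / (r * real CARD('n)) * (r * real CARD('n)) \<le> L * (r * real CARD('n))"
      using L_ge r_pos by (intro mult_right_mono) auto
    then show ?thesis using r_pos by (simp add: mult.assoc)
  qed
  have t1: "1 \<le> (real t)\<^sup>2" using t_pos by simp
  have "1 \<le> L * r * real CARD('n) * (real t)\<^sup>2"
    using mult_mono[OF Lrd t1] Lrd by simp
  then have card1: "1 \<le> real (card Ct)" unfolding Ct_card by (rule one_le_power)
  have pi1: "1 \<le> pi_t t"
  proof -
    have "9 \<le> pi\<^sup>2" using pi_gt3 power_mono[of 3 pi 2] by simp
    then have "9 * 1 \<le> pi\<^sup>2 * (real t)\<^sup>2" using t1 by (intro mult_mono) auto
    then show ?thesis by (simp add: pi_t_def)
  qed
  have arg8: "8 \<le> 8 * real (card Ct) * pi_t t / delta"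
  proof -
    have "8 * 1 * 1 \<le> 8 * real (card Ct) * pi_t t" using card1 pi1 by (intro mult_mono) auto
    also have "\<dots> \<le> 8 * real (card Ct) * pi_t t / delta"
      using delta card1 pi1 by (simp add: le_divide_eq)
    finally show ?thesis by simp
  qed
  have lnlow: "7 / 8 \<le> ln (8 * real (card Ct) * pi_t t / delta)"
    by (rule ln_low[OF arg8])
  have b1: "1 \<le> b"
  proof -
    have "1 \<le> beta t (card Ct) delta" using lnlow by (simp add: beta_def)
    then show ?thesis by (simp add: b_def)
  qed
  have Erd: "\<bar>f d - mu d\<bar> \<le> b * s d" using Er dCt by (simp add: b_def mu_def s_def)
  have Ert: "\<bar>f (x t) - mu (x t)\<bar> \<le> b * s (x t)" using Er by (simp add: b_def mu_def s_def)
  have Ers: "\<bar>f xstar - mu xstar\<bar> \<le> b * s xstar" using Er by (simp add: b_def mu_def s_def)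
  have st0: "0 \<le> s (x t)"
  proof -
    have "0 \<le> b * s (x t)" using Ert by (rule order_trans[OF abs_ge_zero])
    then show ?thesis using b1 by (simp add: zero_le_mult_iff)
  qed
  have ss0: "0 \<le> s xstar"
  proof -
    have "0 \<le> b * s xstar" using Ers by (rule order_trans[OF abs_ge_zero])
    then show ?thesis using b1 by (simp add: zero_le_mult_iff)
  qed
  have sd0: "0 < s d"
    using post_var_pos[OF k_psd sigma_pos, of d x "t - 1"] k_diag dC by (simp add: s_def post_sd_def)
  have lip: "f d - 1 / (real t)\<^sup>2 \<le> f xstar"
  proof -
    have "\<bar>f xstar - f d\<bar> \<le> L * l1dist xstar d" using f_lip xstar_min(1) dC by auto
    also have "\<dots> \<le> L * (1 / (L * (real t)\<^sup>2))"
      using disc_close xstar_min(1) L_pos by (intro mult_left_mono) (auto simp: d_def)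
    also have "\<dots> = 1 / (real t)\<^sup>2" using L_pos by simp
    finally show ?thesis by (simp add: abs_le_iff)
  qed
  have Ey': "b * s (x t) \<le> xi - f xstar" using Ey by (simp add: b_def s_def xi_def)
  have ets: "EI k sn x y (t - 1) xstar \<le> EI k sn x y (t - 1) (x t)" using x_EI xstar_min(1) by auto
  have etd: "EI k sn x y (t - 1) d \<le> EI k sn x y (t - 1) (x t)" using x_EI dC by auto
  have cy: "3 \<le> c_y sn t" by (simp add: c_y_def)
  have ca: "1 \<le> c_alpha" by (simp add: c_alpha_def)
  have "f (x t) - f xstar \<le> (c_y sn t + 2 * b + nphi 0) * s (x t) + c_alpha * b * s d + 1 / (real t)\<^sup>2"
    by (rule core[OF b1 st0 ss0 sd0 Ert Ers Erd lip Ey' EIe EIe EIe ets etd cy ca])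
  then show ?thesis by (simp add: b_def s_def d_def)
qed

end
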